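(* Let $G$ be an $r$-regular finite simple graph of order $n$, $r\ge 1$. If $r$ is even, then $$\frac{1-r}{1+r}\,n\le \gamma^{0}_{st}(G)\le 0,$$ and if $r$ is odd, then $$-\frac{r^2+1}{r^2+2r-1}\,n\le \gamma^{0}_{st}(G)\le -\frac{n}{r}.$$
   Context: For a vertex $v$ of a graph $G=(V,E)$, $N(v)$ is its open neighborhood, and for $f:V\to\mathbb{R}$ and $B\subseteq V$ write $f(B)=\sum_{v\in B}f(v)$; $f(V)$ is the weight of $f$. An inverse signed total dominating function (ISTDF) of $G$ is a function $f:V\to\{-1,1\}$ such that $f(N(v))\le 0$ for every $v\in V$. The inverse signed total domination number $\gamma^{0}_{st}(G)$ is the maximum weight of an ISTDF of $G$. *)

theory Defs
  imports Complex_Main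
begin

definition simple_graph :: "'a set \<Rightarrow> ('a \<Rightarrow> 'a \<Rightarrow> bool) \<Rightarrow> bool" where
  "simple_graph V E \<longleftrightarrow> finite V \<and> (\<forall>u v. E u v \<longrightarrow> u \<in> V \<and> v \<in> V)
     \<and> (\<forall>u v. E u v \<longrightarrow> E v u) \<and> (\<forall>v. \<not> E v v)"

definition nbhd :: "'a set \<Rightarrow> ('a \<Rightarrow> 'a \<Rightarrow> bool) \<Rightarrow> 'a \<Rightarrow> 'a set" where
  "nbhd V E v = {u \<in> V. E v u}"

definition regular :: "'a set \<Rightarrow> ('a \<Rightarrow> 'a \<Rightarrow> bool) \<Rightarrow> nat \<Rightarrow> bool" where
  "regular V E r \<longleftrightarrow> (\<forall>v\<in>V. card (nbhd V E v) = r)"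

text \<open>Inverse signed total dominating function; only the values on V matter.\<close>
definition istdf :: "'a set \<Rightarrow> ('a \<Rightarrow> 'a \<Rightarrow> bool) \<Rightarrow> ('a \<Rightarrow> int) \<Rightarrow> bool" where
  "istdf V E f \<longleftrightarrow> (\<forall>v\<in>V. f v = -1 \<or> f v = 1)
     \<and> (\<forall>v\<in>V. (\<Sum>u\<in>nbhd V E v. f u) \<le> 0)"

definition istd_number :: "'a set \<Rightarrow> ('a \<Rightarrow> 'a \<Rightarrow> bool) \<Rightarrow> int" where
  "istd_number V E = Max {(\<Sum>v\<in>V. f v) | f. istdf V E f}"

end

theory Submission
  imports Defs
begin

lemma card_filter_sum:
  "finite A \<Longrightarrow> card {x\<in>A. P x} = (\<Sum>x\<in>A. if P x then 1 else 0)"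
  by (simp add: sum.inter_filter[symmetric])

lemma double_count:
  assumes g: "simple_graph V E" and A: "A \<subseteq> V" and B: "B \<subseteq> V"
  shows "(\<Sum>u\<in>A. card (nbhd V E u \<inter> B)) = (\<Sum>w\<in>B. card (nbhd V E w \<inter> A))"
proof -
  have fin: "finite V" using g by (simp add: simple_graph_def)
  have fA: "finite A" and fB: "finite B" using A B fin finite_subset by auto
  have sym: "\<And>u w. E u w = E w u" using g unfolding simple_graph_def by blast
  have e1: "\<And>u. u \<in> A \<Longrightarrow> nbhd V E u \<inter> B = {w\<in>B. E u w}" using B by (auto simp: nbhd_def)
  have e2: "\<And>w. w \<in> B \<Longrightarrow> nbhd V E w \<inter> A = {u\<in>A. E u w}" using A sym by (auto simp: nbhd_def)
  have "(\<Sum>u\<in>A. card (nbhd V E u \<inter> B)) = (\<Sum>u\<in>A. \<Sum>w\<in>B. if E u w then 1 else 0)"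
    using e1 fB by (simp add: card_filter_sum)
  also have "\<dots> = (\<Sum>w\<in>B. \<Sum>u\<in>A. if E u w then 1 else 0)" by (rule sum.swap)
  also have "\<dots> = (\<Sum>w\<in>B. card (nbhd V E w \<inter> A))"
    using e2 fA by (simp add: card_filter_sum)
  finally show ?thesis .
qed

lemma sum_nbhd:
  assumes g: "simple_graph V E" and reg: "regular V E r"
  shows "(\<Sum>u\<in>V. \<Sum>w\<in>nbhd V E u. (f w::int)) = int r * (\<Sum>w\<in>V. f w)"
proof -
  have fin: "finite V" using g by (simp add: simple_graph_def)
  have sym: "\<And>u w. E u w = E w u" using g unfolding simple_graph_def by blast
  have "(\<Sum>u\<in>V. \<Sum>w\<in>nbhd V E u. f w) = (\<Sum>u\<in>V. \<Sum>w\<in>V. if E u w then f w else 0)"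
    using fin by (simp add: nbhd_def sum.inter_filter)
  also have "\<dots> = (\<Sum>w\<in>V. \<Sum>u\<in>V. if E u w then f w else 0)" by (rule sum.swap)
  also have "\<dots> = (\<Sum>w\<in>V. f w * int (card (nbhd V E w)))"
  proof (rule sum.cong[OF refl])
    fix w assume "w \<in> V"
    have "(\<Sum>u\<in>V. if E u w then f w else 0) = (\<Sum>u\<in>{u\<in>V. E u w}. f w)"
      by (simp only: sum.inter_filter[OF fin])
    also have "{u\<in>V. E u w} = nbhd V E w" using sym by (auto simp: nbhd_def)
    also have "(\<Sum>u\<in>nbhd V E w. f w) = f w * int (card (nbhd V E w))" by simp
    finally show "(\<Sum>u\<in>V. if E u w then f w else 0) = f w * int (card (nbhd V E w))" .
  qed
  also have "\<dots> = (\<Sum>w\<in>V. f w * int r)"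
    using reg by (simp add: regular_def)
  also have "\<dots> = int r * (\<Sum>w\<in>V. f w)" by (simp add: sum_distrib_left mult.commute)
  finally show ?thesis .
qed

lemma parity_sum:
  assumes "finite S" "\<forall>x\<in>S. f x = 1 \<or> f x = (-1::int)"
  shows "even (sum f S) \<longleftrightarrow> even (card S)"
  using assms
proof (induction S rule: finite_induct)
  case empty then show ?case by simp
next
  case (insert x F)
  have IH: "even (sum f F) \<longleftrightarrow> even (card F)" using insert by simp
  have fx: "f x = 1 \<or> f x = -1" using insert.prems by simp
  have "sum f (insert x F) = f x + sum f F" using insert.hyps by simp
  moreover have "card (insert x F) = Suc (card F)" using insert.hyps by simp
  ultimately show ?case using IH fx by auto
qed

lemma istdf_weight:
  assumes g: "simple_graph V E" and reg: "regular V E r" and r: "r \<ge> 1" and f: "istdf V E f"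
  shows "(\<Sum>v\<in>V. f v) \<le> 0 \<and> (odd r \<longrightarrow> int r * (\<Sum>v\<in>V. f v) \<le> - int (card V))"
proof -
  have fin: "finite V" using g by (simp add: simple_graph_def)
  have S: "int r * (\<Sum>w\<in>V. f w) = (\<Sum>u\<in>V. \<Sum>w\<in>nbhd V E u. f w)"
    using sum_nbhd[OF g reg] by simp
  have le: "\<forall>u\<in>V. (\<Sum>w\<in>nbhd V E u. f w) \<le> 0" using f by (simp add: istdf_def)
  have "int r * (\<Sum>w\<in>V. f w) \<le> 0" unfolding S by (rule sum_nonpos) (use le in auto)
  hence a: "(\<Sum>v\<in>V. f v) \<le> 0" using r by (simp add: mult_le_0_iff)
  have b: "int r * (\<Sum>v\<in>V. f v) \<le> - int (card V)" if o: "odd r"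
  proof -
    have "\<forall>u\<in>V. (\<Sum>w\<in>nbhd V E u. f w) \<le> -1"
    proof
      fix u assume u: "u \<in> V"
      have fn: "finite (nbhd V E u)" using fin by (simp add: nbhd_def)
      have pm: "\<forall>x\<in>nbhd V E u. f x = 1 \<or> f x = -1" using f by (auto simp: istdf_def nbhd_def)
      have "odd (card (nbhd V E u))" using reg u o by (simp add: regular_def)
      hence "odd (\<Sum>w\<in>nbhd V E u. f w)" using parity_sum[OF fn pm] by simp
      moreover have "(\<Sum>w\<in>nbhd V E u. f w) \<le> 0" using le u by blast
      ultimately show "(\<Sum>w\<in>nbhd V E u. f w) \<le> -1" by presburger
    qed
    hence "(\<Sum>u\<in>V. \<Sum>w\<in>nbhd V E u. f w) \<le> (\<Sum>u\<in>V. -1)" by (intro sum_mono) auto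
    thus ?thesis unfolding S by simp
  qed
  show ?thesis using a b by blast
qed

lemma neg_div_mult: fixes a D X :: real shows "- (a / D) * X = - a * X / D"
  by simp

lemma ineq_even: fixes x p m :: real assumes "m \<le> x*p" shows "(1-x)*(p+m) \<le> (1+x)*(p-m)"
  using assms by (simp add: algebra_simps)
lemma ineq_odd: fixes x p m :: real assumes "(x - 1)*m \<le> (x+1)*(x*p)" shows "- (x^2+1)*(p+m) \<le> (x^2+2*x-1)*(p-m)"
  using assms by (simp add: algebra_simps power2_eq_square)

theorem theorem3p2:
  fixes V :: "'a set" and E :: "'a \<Rightarrow> 'a \<Rightarrow> bool" and r :: nat
  assumes "simple_graph V E" and "regular V E r" and "r \<ge> 1"
  shows "(even r \<longrightarrow>
            (1 - real r) / (1 + real r) * real (card V) \<le> real_of_int (istd_number V E)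
            \<and> istd_number V E \<le> 0)
       \<and> (odd r \<longrightarrow>
            - ((real r ^ 2 + 1) / (real r ^ 2 + 2 * real r - 1)) * real (card V)
               \<le> real_of_int (istd_number V E)
            \<and> real_of_int (istd_number V E) \<le> - real (card V) / real r)"
proof -
  note g = assms(1) and reg = assms(2) and r = assms(3)
  have fin: "finite V" using g by (simp add: simple_graph_def)
  let ?S = "{(\<Sum>v\<in>V. f v) | f. istdf V E f}"
  have sub: "?S \<subseteq> {- int (card V) .. int (card V)}"
  proof
    fix x assume "x \<in> ?S"
    then obtain f where x: "x = (\<Sum>v\<in>V. f v)" and f: "istdf V E f" by blast
    have pm: "\<forall>v\<in>V. f v = -1 \<or> f v = 1" using f by (simp add: istdf_def)
    have "(\<Sum>v\<in>V. f v) \<le> (\<Sum>v\<in>V. 1)" by (rule sum_mono) (use pm in auto)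
    moreover have "(\<Sum>v\<in>V. -1) \<le> (\<Sum>v\<in>V. f v)" by (rule sum_mono) (use pm in auto)
    ultimately show "x \<in> {- int (card V) .. int (card V)}" using x by simp
  qed
  have finS: "finite ?S" using sub finite_subset by blast
  have m1: "istdf V E (\<lambda>_. -1)"
  proof -
    have "\<forall>v\<in>V. (\<Sum>u\<in>nbhd V E v. (-1::int)) \<le> 0" by simp
    thus ?thesis by (simp add: istdf_def)
  qed
  hence neS: "?S \<noteq> {}" by blast
  have "istd_number V E \<in> ?S" unfolding istd_number_def using Max_in[OF finS neS] .
  then obtain f where fw: "istd_number V E = (\<Sum>v\<in>V. f v)" and f: "istdf V E f" by blast
  have maxf: "\<And>h. istdf V E h \<Longrightarrow> (\<Sum>v\<in>V. h v) \<le> (\<Sum>v\<in>V. f v)"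
  proof -
    fix h assume "istdf V E h"
    hence "(\<Sum>v\<in>V. h v) \<in> ?S" by blast
    hence "(\<Sum>v\<in>V. h v) \<le> istd_number V E" unfolding istd_number_def using Max_ge[OF finS] by blast
    thus "(\<Sum>v\<in>V. h v) \<le> (\<Sum>v\<in>V. f v)" using fw by simp
  qed
  have pm: "\<forall>v\<in>V. f v = -1 \<or> f v = 1" and le: "\<forall>u\<in>V. (\<Sum>w\<in>nbhd V E u. f w) \<le> 0"
    using f by (auto simp: istdf_def)
  define P where "P = {v\<in>V. f v = 1}"
  define M where "M = {v\<in>V. f v = -1}"
  define U where "U = {u\<in>V. -1 \<le> (\<Sum>w\<in>nbhd V E u. f w)}"
  have PV: "P \<subseteq> V" and MV: "M \<subseteq> V" and UV: "U \<subseteq> V" by (auto simp: P_def M_def U_def)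
  have fP: "finite P" and fM: "finite M" and fU: "finite U" using finite_subset[OF PV fin] finite_subset[OF MV fin] finite_subset[OF UV fin] by auto
  have PM: "P \<inter> M = {}" by (auto simp: P_def M_def)
  have VPM: "V = P \<union> M" using pm by (auto simp: P_def M_def)
  have cardV: "card V = card P + card M" unfolding VPM by (rule card_Un_disjoint) (use fP fM PM in auto)
  have wt: "(\<Sum>v\<in>V. f v) = int (card P) - int (card M)"
  proof -
    have "(\<Sum>v\<in>V. f v) = (\<Sum>v\<in>P. f v) + (\<Sum>v\<in>M. f v)"
      unfolding VPM by (rule sum.union_disjoint) (use fP fM PM in auto)
    also have "(\<Sum>v\<in>P. f v) = (\<Sum>v\<in>P. 1)" by (rule sum.cong) (auto simp: P_def)
    also have "(\<Sum>v\<in>M. f v) = (\<Sum>v\<in>M. -1)" by (rule sum.cong) (auto simp: M_def)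
    finally show ?thesis by simp
  qed
  have cover: "\<forall>v\<in>M. \<exists>u\<in>U. v \<in> nbhd V E u"
  proof
    fix v assume vM: "v \<in> M"
    hence vV: "v \<in> V" and fv: "f v = -1" by (auto simp: M_def)
    define h where "h = f(v := 1)"
    have "(\<Sum>w\<in>V. h w) = (\<Sum>w\<in>V. f w) + 2"
    proof -
      have "(\<Sum>w\<in>V. h w) = h v + (\<Sum>w\<in>V-{v}. h w)" using fin vV by (simp add: sum.remove)
      also have "(\<Sum>w\<in>V-{v}. h w) = (\<Sum>w\<in>V-{v}. f w)" by (rule sum.cong) (auto simp: h_def)
      also have "(\<Sum>w\<in>V. f w) = f v + (\<Sum>w\<in>V-{v}. f w)" using fin vV by (simp add: sum.remove)
      ultimately show ?thesis using fv by (simp add: h_def)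
    qed
    hence "\<not> istdf V E h" using maxf by fastforce
    moreover have "\<forall>w\<in>V. h w = -1 \<or> h w = 1" using pm by (simp add: h_def)
    ultimately obtain u where uV: "u \<in> V" and pos: "(\<Sum>w\<in>nbhd V E u. h w) > 0"
      by (auto simp: istdf_def not_le)
    have fn: "finite (nbhd V E u)" using fin by (simp add: nbhd_def)
    show "\<exists>u\<in>U. v \<in> nbhd V E u"
    proof (cases "v \<in> nbhd V E u")
      case False
      hence "(\<Sum>w\<in>nbhd V E u. h w) = (\<Sum>w\<in>nbhd V E u. f w)"
        by (intro sum.cong) (auto simp: h_def)
      thus ?thesis using pos le uV by auto
    next
      case True
      have "(\<Sum>w\<in>nbhd V E u. h w) = h v + (\<Sum>w\<in>nbhd V E u-{v}. h w)" using fn True by (simp add: sum.remove)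
      also have "(\<Sum>w\<in>nbhd V E u-{v}. h w) = (\<Sum>w\<in>nbhd V E u-{v}. f w)" by (rule sum.cong) (auto simp: h_def)
      also have "(\<Sum>w\<in>nbhd V E u-{v}. f w) = (\<Sum>w\<in>nbhd V E u. f w) - f v" using fn True by (simp add: sum.remove)
      finally have "(\<Sum>w\<in>nbhd V E u. h w) = (\<Sum>w\<in>nbhd V E u. f w) + 2" using fv by (simp add: h_def)
      hence "u \<in> U" using pos uV by (simp add: U_def)
      thus ?thesis using True by blast
    qed
  qed
  have loc: "\<forall>u\<in>U. card (nbhd V E u \<inter> M) + card (nbhd V E u \<inter> P) = r
      \<and> 2 * card (nbhd V E u \<inter> M) \<le> r + 1 \<and> r \<le> 2 * card (nbhd V E u \<inter> P) + 1"
  proof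
    fix u assume uU: "u \<in> U"
    hence uV: "u \<in> V" and ge: "-1 \<le> (\<Sum>w\<in>nbhd V E u. f w)" by (auto simp: U_def)
    let ?N = "nbhd V E u"
    have fn: "finite ?N" using fin by (simp add: nbhd_def)
    have NV: "?N \<subseteq> V" by (auto simp: nbhd_def)
    have dN: "?N = (?N \<inter> P) \<union> (?N \<inter> M)" using NV VPM by blast
    have c: "card (?N \<inter> M) + card (?N \<inter> P) = r"
    proof -
      have "card ?N = card ((?N \<inter> P) \<union> (?N \<inter> M))" using dN by simp
      also have "\<dots> = card (?N \<inter> P) + card (?N \<inter> M)" by (rule card_Un_disjoint) (use fn PM in auto)
      finally have "card ?N = card (?N \<inter> P) + card (?N \<inter> M)" .
      moreover have "card ?N = r" using reg uV by (simp add: regular_def)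
      ultimately show ?thesis by simp
    qed
    have "(\<Sum>w\<in>?N. f w) = (\<Sum>w\<in>(?N \<inter> P) \<union> (?N \<inter> M). f w)" using dN by simp
    also have "\<dots> = (\<Sum>w\<in>?N \<inter> P. f w) + (\<Sum>w\<in>?N \<inter> M. f w)" by (rule sum.union_disjoint) (use fn PM in auto)
    also have "(\<Sum>w\<in>?N \<inter> P. f w) = (\<Sum>w\<in>?N \<inter> P. 1)" by (rule sum.cong) (auto simp: P_def)
    also have "(\<Sum>w\<in>?N \<inter> M. f w) = (\<Sum>w\<in>?N \<inter> M. -1)" by (rule sum.cong) (auto simp: M_def)
    finally have "(\<Sum>w\<in>?N. f w) = int (card (?N \<inter> P)) - int (card (?N \<inter> M))" by simp
    thus "card (?N \<inter> M) + card (?N \<inter> P) = r \<and> 2 * card (?N \<inter> M) \<le> r + 1 \<and> r \<le> 2 * card (?N \<inter> P) + 1"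
      using c ge by linarith
  qed
  have c1: "card M \<le> (\<Sum>u\<in>U. card (nbhd V E u \<inter> M))"
  proof -
    have "M \<subseteq> (\<Union>u\<in>U. nbhd V E u \<inter> M)" using cover by blast
    hence "card M \<le> card (\<Union>u\<in>U. nbhd V E u \<inter> M)"
      using fU fin by (intro card_mono) (auto simp: nbhd_def)
    also have "\<dots> \<le> (\<Sum>u\<in>U. card (nbhd V E u \<inter> M))" using fU by (rule card_UN_le)
    finally show ?thesis .
  qed
  have c2: "(\<Sum>u\<in>U. card (nbhd V E u \<inter> P)) \<le> r * card P"
  proof -
    have "(\<Sum>u\<in>U. card (nbhd V E u \<inter> P)) = (\<Sum>w\<in>P. card (nbhd V E w \<inter> U))"
      using double_count[OF g UV PV] .
    also have "\<dots> \<le> (\<Sum>w\<in>P. card (nbhd V E w))"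
      by (rule sum_mono, rule card_mono) (use fin in \<open>auto simp: nbhd_def\<close>)
    also have "\<dots> = (\<Sum>w\<in>P. r)" using reg PV by (intro sum.cong) (auto simp: regular_def)
    finally show ?thesis by (simp add: mult.commute)
  qed
  have upper: "(\<Sum>v\<in>V. f v) \<le> 0 \<and> (odd r \<longrightarrow> int r * (\<Sum>v\<in>V. f v) \<le> - int (card V))"
    using istdf_weight[OF g reg r f] .
  have rpos: "real r > 0" using r by simp
  show ?thesis
  proof (intro conjI impI)
    assume ev: "even r"
    have "\<forall>u\<in>U. card (nbhd V E u \<inter> M) \<le> card (nbhd V E u \<inter> P)"
    proof
      fix u assume "u \<in> U"
      with loc have a: "card (nbhd V E u \<inter> M) + card (nbhd V E u \<inter> P) = r"
        "2 * card (nbhd V E u \<inter> M) \<le> r + 1" by auto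
      thus "card (nbhd V E u \<inter> M) \<le> card (nbhd V E u \<inter> P)" using ev by presburger
    qed
    hence "(\<Sum>u\<in>U. card (nbhd V E u \<inter> M)) \<le> (\<Sum>u\<in>U. card (nbhd V E u \<inter> P))" by (intro sum_mono) auto
    hence key: "card M \<le> r * card P" using c1 c2 by linarith
    hence "real (card M) \<le> real (r * card P)" by (simp only: of_nat_le_iff)
    hence key': "real (card M) \<le> real r * real (card P)" by simp
    have "(1 - real r) * (real (card P) + real (card M)) \<le> (1 + real r) * (real (card P) - real (card M))"
      using ineq_even[OF key'] .
    hence "(1 - real r) * (real (card P) + real (card M)) / (1 + real r) \<le> real (card P) - real (card M)"
      using rpos by (subst pos_divide_le_eq) (simp_all add: mult.commute)
    hence "(1 - real r) / (1 + real r) * (real (card P) + real (card M)) \<le> real (card P) - real (card M)"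
      by simp
    thus "(1 - real r) / (1 + real r) * real (card V) \<le> real_of_int (istd_number V E)"
      using fw wt cardV by simp
    show "istd_number V E \<le> 0" using fw upper by simp
  next
    assume od: "odd r"
    have "\<forall>u\<in>U. (r - 1) * card (nbhd V E u \<inter> M) \<le> (r + 1) * card (nbhd V E u \<inter> P)"
    proof
      fix u assume "u \<in> U"
      with loc have a: "2 * card (nbhd V E u \<inter> M) \<le> r + 1" "r \<le> 2 * card (nbhd V E u \<inter> P) + 1" by auto
      have A: "(r - 1) * (2 * card (nbhd V E u \<inter> M)) \<le> (r - 1) * (r + 1)" using a(1) by (rule mult_left_mono) simp
      have "r - 1 \<le> 2 * card (nbhd V E u \<inter> P)" using a(2) by linarith
      hence B: "(r + 1) * (r - 1) \<le> (r + 1) * (2 * card (nbhd V E u \<inter> P))" by (rule mult_left_mono) simp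
      have C: "(r - 1) * (r + 1) = (r + 1) * (r - 1)" by (rule mult.commute)
      have "(r - 1) * (2 * card (nbhd V E u \<inter> M)) \<le> (r + 1) * (2 * card (nbhd V E u \<inter> P))"
        using A B C by linarith
      thus "(r - 1) * card (nbhd V E u \<inter> M) \<le> (r + 1) * card (nbhd V E u \<inter> P)"
        by (simp add: mult.left_commute[of _ 2])
    qed
    hence "(\<Sum>u\<in>U. (r - 1) * card (nbhd V E u \<inter> M)) \<le> (\<Sum>u\<in>U. (r + 1) * card (nbhd V E u \<inter> P))" by (intro sum_mono) auto
    hence s: "(r - 1) * (\<Sum>u\<in>U. card (nbhd V E u \<inter> M)) \<le> (r + 1) * (\<Sum>u\<in>U. card (nbhd V E u \<inter> P))"
      by (simp add: sum_distrib_left)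
    have "(r - 1) * card M \<le> (r - 1) * (\<Sum>u\<in>U. card (nbhd V E u \<inter> M))" using c1 by (rule mult_left_mono) simp
    also have "\<dots> \<le> (r + 1) * (\<Sum>u\<in>U. card (nbhd V E u \<inter> P))" by (rule s)
    also have "\<dots> \<le> (r + 1) * (r * card P)" using c2 by (rule mult_left_mono) simp
    finally have key: "(r - 1) * card M \<le> (r + 1) * (r * card P)" .
    hence "real ((r - 1) * card M) \<le> real ((r + 1) * (r * card P))" by (simp only: of_nat_le_iff)
    hence key': "(real r - 1) * real (card M) \<le> (real r + 1) * (real r * real (card P))"
      using r by (simp add: of_nat_diff distrib_right)
    have sq: "real r ^ 2 \<ge> 0" by simp
    have r1: "real r \<ge> 1" using r by simp
    have D: "real r ^ 2 + 2 * real r - 1 > 0" using sq r1 by linarith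
    have "- (real r ^ 2 + 1) * (real (card P) + real (card M)) \<le> (real r ^ 2 + 2 * real r - 1) * (real (card P) - real (card M))"
      using ineq_odd[OF key'] .
    hence "- (real r ^ 2 + 1) * (real (card P) + real (card M)) / (real r ^ 2 + 2 * real r - 1) \<le> real (card P) - real (card M)"
      using D by (subst pos_divide_le_eq) (simp_all add: mult.commute)
    hence "- ((real r ^ 2 + 1) / (real r ^ 2 + 2 * real r - 1)) * (real (card P) + real (card M)) \<le> real (card P) - real (card M)"
      by (simp only: neg_div_mult)
    thus "- ((real r ^ 2 + 1) / (real r ^ 2 + 2 * real r - 1)) * real (card V) \<le> real_of_int (istd_number V E)"
      using fw wt cardV by simp
    have "int r * istd_number V E \<le> - int (card V)" using upper od fw by simp
    hence "real_of_int (int r * istd_number V E) \<le> real_of_int (- int (card V))" by (simp only: of_int_le_iff)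
    hence "real r * real_of_int (istd_number V E) \<le> - real (card V)" by simp
    thus "real_of_int (istd_number V E) \<le> - real (card V) / real r"
      using rpos by (subst le_divide_eq) (simp add: mult.commute)
  qed
qed

end
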